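(* Let \[ I_{-1}:=\iint_T\frac{dx\,dy}{xy(-\ln xy)}. \] Then \[ I_{-1}=\int_0^\infty\left(1-\frac{1}{\binom{2t}{t}}\right)\frac{dt}{t^2}=\int_0^1\ln\!\left(1+\frac{\ln(1-x)}{\ln x}\right)\frac{dx}{x}. \]
   Context: $T:=\{(x,y)\in[0,1]^2 : x+y\ge 1\}$. The generalized binomial coefficient is $\binom{s}{t}:=\frac{\Gamma(s+1)}{\Gamma(t+1)\Gamma(s-t+1)}$. *)

theory Defs
  imports "HOL-Analysis.Analysis"
begin

definition regionT :: "(real \<times> real) set" where
  "regionT = {(x, y). 0 \<le> x \<and> x \<le> 1 \<and> 0 \<le> y \<and> y \<le> 1 \<and> x + y \<ge> 1}"

definition gen_binom :: "real \<Rightarrow> real \<Rightarrow> real" where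
  "gen_binom s t = Gamma (s + 1) / (Gamma (t + 1) * Gamma (s - t + 1))"

definition Im1_integrand :: "real \<times> real \<Rightarrow> real" where
  "Im1_integrand p = 1 / (fst p * snd p * (- ln (fst p * snd p)))"

end

theory Submission
  imports Defs "HOL-Real_Asymp.Real_Asymp"
begin

lemma regionT_sets[measurable]: "regionT \<in> sets (borel::(real\<times>real) measure)"
proof -
  have "regionT = {p\<in>space (lborel \<Otimes>\<^sub>M lborel). 0 \<le> fst p \<and> fst p \<le> 1 \<and> 0 \<le> snd p \<and> snd p \<le> 1 \<and> fst p + snd p \<ge> (1::real)}"
    by (auto simp: regionT_def space_pair_measure)
  also have "\<dots> \<in> sets (lborel \<Otimes>\<^sub>M lborel)" by measurable
  finally show ?thesis by (metis lborel_prod sets_lborel)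
qed

lemma Im1_meas[measurable]: "Im1_integrand \<in> borel_measurable borel"
proof -
  have "Im1_integrand \<in> borel_measurable (lborel \<Otimes>\<^sub>M lborel)"
  unfolding Im1_integrand_def by measurable
  thus ?thesis by (simp add: lborel_prod)
qed

lemma tonelli2:
  fixes h :: "real \<times> real \<Rightarrow> ennreal"
  assumes "h \<in> borel_measurable borel"
  shows "(\<integral>\<^sup>+p. h p \<partial>lborel) = (\<integral>\<^sup>+x. \<integral>\<^sup>+y. h (x,y) \<partial>lborel \<partial>lborel)"
proof -
  have "h \<in> borel_measurable (lborel \<Otimes>\<^sub>M lborel)" using assms by (simp add: lborel_prod)
  from lborel.nn_integral_fst[OF this] show ?thesis by (simp add: lborel_prod)
qed

lemma meas3: "(\<lambda>(p::real\<times>real, s::real). ennreal (indicator regionT p * indicator {0<..} s * (fst p * snd p) powr (s - 1))) \<in> borel_measurable ((lborel :: (real \<times> real) measure) \<Otimes>\<^sub>M (lborel :: real measure))"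
proof -
  have [measurable]: "regionT \<in> sets (lborel \<Otimes>\<^sub>M lborel)" unfolding lborel_prod by simp
  have "(\<lambda>(p::real\<times>real, s::real). ennreal (indicator regionT p * indicator {0<..} s * (fst p * snd p) powr (s - 1))) \<in> borel_measurable ((lborel \<Otimes>\<^sub>M lborel) \<Otimes>\<^sub>M lborel)"
    by measurable
  thus ?thesis by (subst (asm) lborel_prod)
qed

lemma tonelli2p:
  fixes h :: "real \<times> real \<Rightarrow> ennreal"
  assumes "h \<in> borel_measurable (lborel \<Otimes>\<^sub>M lborel)"
  shows "(\<integral>\<^sup>+p. h p \<partial>lborel) = (\<integral>\<^sup>+x. \<integral>\<^sup>+y. h (x,y) \<partial>lborel \<partial>lborel)"
  using lborel.nn_integral_fst[OF assms] by (simp add: lborel_prod)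

lemma exp_int:
  fixes c :: real assumes c: "0 < c" "c < 1"
  shows "(\<integral>\<^sup>+s. ennreal (indicator {0<..} s * c powr (s - 1)) \<partial>lborel) = ennreal (1 / (c * (- ln c)))"
proof -
  have lnc: "ln c < 0" using c by simp
  have "(\<integral>\<^sup>+s. ennreal (c powr (s - 1)) * indicator {0..} s \<partial>lborel) = ennreal (0 - c powr 0 / (c * ln c))"
  proof (rule nn_integral_FTC_atLeast)
    show "(\<lambda>s. c powr (s - 1)) \<in> borel_measurable borel" by measurable
    fix s :: real
    show "DERIV (\<lambda>s. c powr s / (c * ln c)) s :> c powr (s - 1)"
      using c lnc by (auto intro!: derivative_eq_intros simp: powr_diff field_simps)
    show "0 \<le> c powr (s - 1)" by simp
  next
    have "((\<lambda>s. c powr s) \<longlongrightarrow> 0) at_top" using c by real_asymp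
    then show "((\<lambda>s. c powr s / (c * ln c)) \<longlongrightarrow> 0) at_top"
      by (rule tendsto_divide_zero)
  qed
  also have "0 - c powr 0 / (c * ln c) = 1 / (c * (- ln c))" using c by simp
  also have "(\<integral>\<^sup>+s. ennreal (c powr (s - 1)) * indicator {0..} s \<partial>lborel) =
     (\<integral>\<^sup>+s. ennreal (indicator {0<..} s * c powr (s - 1)) \<partial>lborel)"
    by (intro nn_integral_cong_AE eventually_mono[OF AE_lborel_singleton[of 0]])
       (auto simp: indicator_def)
  finally show ?thesis .
qed

lemma sliceG:
  fixes x :: real assumes x: "0 < x" "x < 1"
  shows "(\<integral>\<^sup>+y. ennreal (indicator regionT (x,y) * Im1_integrand (x,y)) \<partial>lborel)
         = ennreal (ln (1 + ln (1 - x) / ln x) / x)"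
proof -
  have lnx: "ln x < 0" using x by simp
  define f where "f y = 1 / (x * y * (- ln (x * y)))" for y
  define F where "F y = - ln (- ln x - ln y) / x" for y
  have "(\<integral>\<^sup>+y. ennreal (f y) * indicator {1-x..1} y \<partial>lborel) = ennreal (F 1 - F (1 - x))"
  proof (rule nn_integral_FTC_Icc)
    show "f \<in> borel_measurable borel" unfolding f_def by measurable
    fix y assume y: "y \<in> {1-x..1}"
    hence y0: "0 < y" "y \<le> 1" using x by auto
    hence lny: "ln y \<le> 0" by simp
    have pos: "- ln x - ln y > 0" using lnx lny by simp
    have d: "DERIV F y :> (1 / y) / (- ln x - ln y) / x"
      unfolding F_def using x y0 pos
      by (auto intro!: derivative_eq_intros)
    have "(1 / y) / (- ln x - ln y) / x = f y"
      unfolding f_def using x y0 pos by (simp add: ln_mult)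
    with d show "DERIV F y :> f y" by simp
    show "0 \<le> f y" unfolding f_def using x y0 pos by (simp add: ln_mult)
  qed (use x in auto)
  also have "F 1 - F (1 - x) = ln (1 + ln (1 - x) / ln x) / x"
  proof -
    have l1: "ln (1 - x) < 0" using x by simp
    have "1 + ln (1 - x) / ln x = (- ln x - ln (1 - x)) / (- ln x)" using lnx by (simp add: field_simps)
    moreover have "ln ((- ln x - ln (1 - x)) / (- ln x)) = ln (- ln x - ln (1 - x)) - ln (- ln x)"
      using lnx l1 by (intro ln_divide_pos) auto
    ultimately have "ln (1 + ln (1 - x) / ln x) = ln (- ln x - ln (1 - x)) - ln (- ln x)"
      by simp
    thus ?thesis unfolding F_def by (simp add: diff_divide_distrib)
  qed
  also have "(\<integral>\<^sup>+y. ennreal (f y) * indicator {1-x..1} y \<partial>lborel) =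
     (\<integral>\<^sup>+y. ennreal (indicator regionT (x,y) * Im1_integrand (x,y)) \<partial>lborel)"
    using x by (intro nn_integral_cong) (auto simp: indicator_def regionT_def f_def Im1_integrand_def)
  finally show ?thesis .
qed

lemma sliceF:
  fixes x s :: real assumes x: "0 < x" "x < 1" and s: "0 < s"
  shows "(\<integral>\<^sup>+y. ennreal (indicator regionT (x,y) * (x * y) powr (s - 1)) \<partial>lborel)
         = ennreal (x powr (s - 1) * (1 - (1 - x) powr s) / s)"
proof -
  define F where "F y = x powr (s - 1) * y powr s / s" for y
  have "(\<integral>\<^sup>+y. ennreal ((x * y) powr (s - 1)) * indicator {1-x..1} y \<partial>lborel) = ennreal (F 1 - F (1 - x))"
  proof (rule nn_integral_FTC_Icc)
    show "(\<lambda>y. (x * y) powr (s - 1)) \<in> borel_measurable borel" by measurable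
    fix y assume y: "y \<in> {1-x..1}"
    hence y0: "0 < y" "y \<le> 1" using x by auto
    have d: "DERIV F y :> x powr (s - 1) * (s * y powr (s - 1)) / s"
      unfolding F_def using x y0 s
      by (auto intro!: derivative_eq_intros)
    have "x powr (s - 1) * (s * y powr (s - 1)) / s = (x * y) powr (s - 1)"
      using x y0 s by (simp add: powr_mult)
    with d show "DERIV F y :> (x * y) powr (s - 1)" by simp
    show "0 \<le> (x * y) powr (s - 1)" by simp
  qed (use x in auto)
  also have "F 1 - F (1 - x) = x powr (s - 1) * (1 - (1 - x) powr s) / s"
    unfolding F_def by (simp add: diff_divide_distrib right_diff_distrib)
  also have "(\<integral>\<^sup>+y. ennreal ((x * y) powr (s - 1)) * indicator {1-x..1} y \<partial>lborel) =
     (\<integral>\<^sup>+y. ennreal (indicator regionT (x,y) * (x * y) powr (s - 1)) \<partial>lborel)"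
    using x by (intro nn_integral_cong) (auto simp: indicator_def regionT_def)
  finally show ?thesis .
qed

lemma Ff_eq:
fixes s :: real assumes s: "0 < s"
shows "(Beta s 1 - Beta s (s + 1)) / s = (1 - 1 / gen_binom (2 * s) s) / s\<^sup>2"
proof -
  have g: "Gamma (s + 1) = s * Gamma s" using s by (intro Gamma_plus1) (auto dest: nonpos_Ints_nonpos)
  have e: "s + (s + 1) = 2 * s + 1" "2 * s - s + 1 = s + 1" by simp_all
  have gp: "Gamma (2 * s + 1) > 0" "Gamma s > 0" using s by auto
  have alg: "\<And>a b. a > 0 \<Longrightarrow> b > 0 \<Longrightarrow> (a * 1 / (s * a) - a * (s * a) / b) / s = (1 - 1 / (b / (s * a * (s * a)))) / s\<^sup>2"
    using s by (simp add: field_simps power2_eq_square)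
  show ?thesis unfolding Beta_def gen_binom_def e g Gamma_1 using alg[OF gp(2) gp(1)] by simp
qed

lemma betaF:
  fixes s :: real assumes s: "0 < s"
  shows "(\<integral>\<^sup>+x. ennreal (indicator {0<..<1} x * (x powr (s - 1) * (1 - (1 - x) powr s) / s)) \<partial>lborel)
         = ennreal ((1 - 1 / gen_binom (2 * s) s) / s\<^sup>2)"
proof -
  have h1: "((\<lambda>t. t powr (s - 1) * (1 - t) powr (1 - 1)) has_integral Beta s 1) {0<..<1}"
    using has_integral_Beta_real[of s 1] s by (simp add: has_integral_Icc_iff_Ioo)
  have h2: "((\<lambda>t. t powr (s - 1) * (1 - t) powr ((s + 1) - 1)) has_integral Beta s (s + 1)) {0<..<1}"
    using has_integral_Beta_real[of s "s+1"] s by (simp add: has_integral_Icc_iff_Ioo)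
  have h3: "((\<lambda>t. (t powr (s - 1) * (1 - t) powr (1 - 1) - t powr (s - 1) * (1 - t) powr ((s + 1) - 1)) / s)
       has_integral (Beta s 1 - Beta s (s + 1)) / s) {0<..<1}"
    using has_integral_diff[OF h1 h2] by (rule has_integral_divide)
  have h4: "((\<lambda>t. t powr (s - 1) * (1 - (1 - t) powr s) / s) has_integral (Beta s 1 - Beta s (s + 1)) / s) {0<..<1}"
  proof -
    have "(t powr (s - 1) * (1 - t) powr (1 - 1) - t powr (s - 1) * (1 - t) powr ((s + 1) - 1)) / s
          = t powr (s - 1) * (1 - (1 - t) powr s) / s" if "t \<in> {0<..<1}" for t
      using that by (simp add: right_diff_distrib)
    then show ?thesis using h3 by (subst (asm) has_integral_cong) auto
  qed
  have "integral\<^sup>N lborel (\<lambda>x. indicator {0<..<1} x * (x powr (s - 1) * (1 - (1 - x) powr s) / s))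
        = (Beta s 1 - Beta s (s + 1)) / s"
  proof (rule nn_integral_has_integral_lebesgue[OF _ h4])
    fix x :: real assume x: "x \<in> {0<..<1}"
    have "(1 - x) powr s \<le> 1 powr s" using x s by (intro powr_mono2) auto
    thus "0 \<le> x powr (s - 1) * (1 - (1 - x) powr s) / s" using s by simp
  qed
  moreover have "(Beta s 1 - Beta s (s + 1)) / s = (1 - 1 / gen_binom (2 * s) s) / s\<^sup>2"
    by (rule Ff_eq[OF s])
  ultimately show ?thesis by simp
qed

lemma Gbound:
  fixes x :: real assumes x: "0 < x" "x < 1"
  shows "0 \<le> ln (1 + ln (1 - x) / ln x) / x \<and> ln (1 + ln (1 - x) / ln x) / x \<le> 12 / sqrt (1 - x)"
proof -
  define u where "u = 1 - x"
  have u: "0 < u" "u < 1" using x by (auto simp: u_def)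
  have lnx: "ln x < 0" using x by simp
  have lnu: "ln u < 0" using u by simp
  define a where "a = ln (1 - x) / ln x"
  have a0: "0 \<le> a" unfolding a_def u_def[symmetric] using lnx lnu by (simp add: divide_nonpos_neg)
  have G0: "0 \<le> ln (1 + a) / x" using a0 x by simp
  have sq: "0 < sqrt u" "sqrt u \<le> 1" using u by auto
  have lnxu: "- ln x \<ge> u" using ln_le_minus_one[OF x(1)] by (simp add: u_def)
  have "ln (1 + a) / x \<le> 12 / sqrt u"
  proof (cases "x \<le> 1/2")
    case True
    have b1: "- x - 2 * x^2 \<le> ln (1 - x)" using ln_one_minus_pos_lower_bound[of x] True x by simp
    have "x * x \<le> (1/2) * x" using True x by (intro mult_right_mono) auto
    hence b2: "2 * x^2 \<le> x" by (simp add: power2_eq_square)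
    have l1: "- ln (1 - x) \<le> 2 * x" using b1 b2 by linarith
    have l2: "- ln x \<ge> 1/2" using lnxu True by (simp add: u_def)
    have "a = (- ln (1 - x)) / (- ln x)" by (simp add: a_def)
    also have "\<dots> \<le> (2 * x) / (1/2)"
      using l1 l2 x by (intro frac_le) auto
    finally have "a \<le> 4 * x" by simp
    hence "ln (1 + a) \<le> 4 * x" using ln_add_one_self_le_self[OF a0] by simp
    hence A4: "ln (1 + a) / x \<le> 4" using x by (simp add: divide_le_eq)
    have "4 * sqrt u \<le> 12" using sq(2) by linarith
    hence "4 \<le> 12 / sqrt u" using sq(1) by (simp only: le_divide_eq) simp
    with A4 show ?thesis by linarith
  next
    case False
    have l1: "- ln u \<le> 1 / u - 1" using ln_le_minus_one[of "1/u"] u by (simp add: ln_div)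
    have "a = (- ln u) / (- ln x)" by (simp add: a_def u_def)
    also have "\<dots> \<le> (- ln u) / u" using lnu u lnxu by (intro frac_le) auto
    also have "(- ln u) / u \<le> (1 / u - 1) / u" using l1 u by (intro divide_right_mono) auto
    finally have "1 + a \<le> 1 + (1 / u - 1) / u" by simp
    also have "\<dots> \<le> 1 / u^2" using u by (simp add: field_simps power2_eq_square)
    finally have "ln (1 + a) \<le> ln (1 / u^2)" using a0 u by (subst ln_le_cancel_iff) auto
    also have "\<dots> = - 4 * ln (sqrt u)" using u by (simp add: ln_div ln_sqrt ln_realpow)
    also have "\<dots> \<le> 4 * (1 / sqrt u)"
      using ln_le_minus_one[of "1 / sqrt u"] sq by (simp add: ln_div)
    finally have A: "ln (1 + a) \<le> 4 / sqrt u" by simp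
    have la: "0 \<le> ln (1 + a)" using a0 by simp
    have "ln (1 + a) / x \<le> ln (1 + a) / (1/2)"
      using False x la by (intro divide_left_mono) auto
    hence "ln (1 + a) / x \<le> 2 * ln (1 + a)" by simp
    also have "\<dots> \<le> 8 / sqrt u" using A by simp
    also have "\<dots> \<le> 12 / sqrt u" using sq by (simp add: divide_right_mono)
    finally show ?thesis .
  qed
  thus ?thesis using G0 by (simp add: a_def u_def)
qed

lemma G_int: "set_integrable lborel {0<..<1::real} (\<lambda>x. ln (1 + ln (1 - x) / ln x) / x)"
proof -
  have B: "set_integrable lborel {0..1::real} (\<lambda>t. 12 * (t powr (1 - 1) * (1 - t) powr (1/2 - 1)))"
    using integrable_Beta[of 1 "1/2"] by (intro set_integrable_mult_right) auto
  show ?thesis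
    unfolding set_integrable_def
  proof (rule Bochner_Integration.integrable_bound[OF B[unfolded set_integrable_def]])
    show "(\<lambda>x. indicator {0<..<1::real} x *\<^sub>R (ln (1 + ln (1 - x) / ln x) / x)) \<in> borel_measurable lborel"
      by measurable
    show "AE x in lborel. norm (indicator {0<..<1::real} x *\<^sub>R (ln (1 + ln (1 - x) / ln x) / x))
       \<le> norm (indicator {0..1} x *\<^sub>R (12 * (x powr (1 - 1) * (1 - x) powr (1/2 - 1))))"
    proof (rule AE_I2)
      fix x :: real
      show "norm (indicator {0<..<1::real} x *\<^sub>R (ln (1 + ln (1 - x) / ln x) / x))
       \<le> norm (indicator {0..1} x *\<^sub>R (12 * (x powr (1 - 1) * (1 - x) powr (1/2 - 1))))"
      proof (cases "x \<in> {0<..<1}")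
        case True
        hence x: "0 < x" "x < 1" by auto
        have "(1 - x) powr (1/2 - 1) = 1 / sqrt (1 - x)"
          using x by (simp add: powr_minus_divide powr_half_sqrt flip: powr_minus)
        hence "12 * (x powr (1 - 1) * (1 - x) powr (1/2 - 1)) = 12 / sqrt (1 - x)" using x by simp
        thus ?thesis using Gbound[OF x] True by auto
      qed auto
    qed
  qed
qed

lemma stepA:
  "(\<integral>\<^sup>+p. ennreal (indicator regionT p * Im1_integrand p) \<partial>lborel)
   = (\<integral>\<^sup>+x. ennreal (indicator {0<..<1} x * (ln (1 + ln (1 - x) / ln x) / x)) \<partial>lborel)"
proof -
  have "(\<integral>\<^sup>+p. ennreal (indicator regionT p * Im1_integrand p) \<partial>lborel)
      = (\<integral>\<^sup>+x. \<integral>\<^sup>+y. ennreal (indicator regionT (x,y) * Im1_integrand (x,y)) \<partial>lborel \<partial>lborel)"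
    by (rule tonelli2) measurable
  also have "\<dots> = (\<integral>\<^sup>+x. ennreal (indicator {0<..<1} x * (ln (1 + ln (1 - x) / ln x) / x)) \<partial>lborel)"
  proof (intro nn_integral_cong_AE eventually_mono[OF eventually_conj[OF AE_lborel_singleton[of 0] AE_lborel_singleton[of 1]]])
    fix x :: real assume x: "x \<noteq> 0 \<and> x \<noteq> 1"
    show "(\<integral>\<^sup>+y. ennreal (indicator regionT (x,y) * Im1_integrand (x,y)) \<partial>lborel)
          = ennreal (indicator {0<..<1} x * (ln (1 + ln (1 - x) / ln x) / x))"
    proof (cases "0 < x \<and> x < 1")
      case True
      thus ?thesis using sliceG[of x] by simp
    next
      case False
      hence "x < 0 \<or> x > 1" using x by auto
      hence "\<And>y. indicator regionT (x,y) = (0::real)" by (auto simp: regionT_def indicator_def)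
      thus ?thesis using False by simp
    qed
  qed
  finally show ?thesis .
qed

lemma pt_exp:
  assumes "p \<noteq> (1,1)"
  shows "ennreal (indicator regionT p * Im1_integrand p) =
     (\<integral>\<^sup>+s. ennreal (indicator regionT p * indicator {0<..} s * (fst p * snd p) powr (s - 1)) \<partial>lborel)"
proof (cases "p \<in> regionT")
  case False thus ?thesis by simp
next
  case True
  obtain x y where p: "p = (x,y)" by (cases p)
  have xy: "0 \<le> x" "x \<le> 1" "0 \<le> y" "y \<le> 1" using True by (auto simp: p regionT_def)
  show ?thesis
  proof (cases "x * y = 0")
    case True
    thus ?thesis using \<open>p \<in> regionT\<close> by (auto simp: p Im1_integrand_def)
  next
    case False
    hence c0: "0 < x * y" using xy by (simp add: less_le)
    have c1: "x * y < 1"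
    proof (cases "x < 1")
      case True
      have "x * y \<le> x * 1" using xy by (intro mult_left_mono) auto
      thus ?thesis using True by simp
    next
      case False
      hence "x = 1" using xy by simp
      hence "y \<noteq> 1" using assms p by auto
      thus ?thesis using xy \<open>x = 1\<close> by simp
    qed
    have "(\<integral>\<^sup>+s. ennreal (indicator regionT p * indicator {0<..} s * (fst p * snd p) powr (s - 1)) \<partial>lborel)
        = (\<integral>\<^sup>+s. ennreal (indicator {0<..} s * (x * y) powr (s - 1)) \<partial>lborel)"
      using \<open>p \<in> regionT\<close> by (simp add: p)
    also have "\<dots> = ennreal (1 / (x * y * (- ln (x * y))))" by (rule exp_int[OF c0 c1])
    finally show ?thesis using \<open>p \<in> regionT\<close> by (simp add: p Im1_integrand_def)
  qed
qed

lemma Ff_nonneg: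
  fixes s :: real assumes s: "0 < s"
  shows "0 \<le> (1 - 1 / gen_binom (2 * s) s) / s\<^sup>2"
proof -
  have "Beta s (s + 1) \<le> Beta s 1" using s by (intro Beta_real_mono) auto
  hence "0 \<le> (Beta s 1 - Beta s (s + 1)) / s" using s by simp
  thus ?thesis using Ff_eq[OF s] by simp
qed

lemma stepB:
  "(\<integral>\<^sup>+p. ennreal (indicator regionT p * Im1_integrand p) \<partial>lborel)
   = (\<integral>\<^sup>+s. ennreal (indicator {0<..} s * ((1 - 1 / gen_binom (2 * s) s) / s\<^sup>2)) \<partial>lborel)"
proof -
  define f where "f p s = ennreal (indicator regionT p * indicator {0<..} s * (fst p * snd p) powr (s - 1))"
    for p :: "real \<times> real" and s :: real
  have "(\<integral>\<^sup>+p. ennreal (indicator regionT p * Im1_integrand p) \<partial>lborel)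
      = (\<integral>\<^sup>+p. \<integral>\<^sup>+s. f p s \<partial>lborel \<partial>lborel)"
    unfolding f_def
    by (intro nn_integral_cong_AE eventually_mono[OF AE_lborel_singleton[of "(1,1)"]] pt_exp)
  also have "\<dots> = (\<integral>\<^sup>+s. \<integral>\<^sup>+p. f p s \<partial>lborel \<partial>lborel)"
    by (rule lborel_pair.Fubini'[symmetric]) (use meas3 in \<open>simp add: f_def\<close>)
  also have "\<dots> = (\<integral>\<^sup>+s. ennreal (indicator {0<..} s * ((1 - 1 / gen_binom (2 * s) s) / s\<^sup>2)) \<partial>lborel)"
  proof (rule nn_integral_cong)
    fix s :: real
    show "(\<integral>\<^sup>+p. f p s \<partial>lborel) = ennreal (indicator {0<..} s * ((1 - 1 / gen_binom (2 * s) s) / s\<^sup>2))"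
    proof (cases "0 < s")
      case False thus ?thesis by (simp add: f_def)
    next
      case s: True
      have "(\<integral>\<^sup>+p. f p s \<partial>lborel) = (\<integral>\<^sup>+x. \<integral>\<^sup>+y. f (x,y) s \<partial>lborel \<partial>lborel)"
      proof (rule tonelli2p)
        have [measurable]: "regionT \<in> sets (lborel \<Otimes>\<^sub>M lborel)" unfolding lborel_prod by simp
        show "(\<lambda>p. f p s) \<in> borel_measurable (lborel \<Otimes>\<^sub>M lborel)" unfolding f_def by measurable
      qed
      also have "\<dots> = (\<integral>\<^sup>+x. ennreal (indicator {0<..<1} x * (x powr (s - 1) * (1 - (1 - x) powr s) / s)) \<partial>lborel)"
      proof (intro nn_integral_cong_AE eventually_mono[OF eventually_conj[OF AE_lborel_singleton[of 0] AE_lborel_singleton[of 1]]])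
        fix x :: real assume x: "x \<noteq> 0 \<and> x \<noteq> 1"
        show "(\<integral>\<^sup>+y. f (x,y) s \<partial>lborel)
              = ennreal (indicator {0<..<1} x * (x powr (s - 1) * (1 - (1 - x) powr s) / s))"
        proof (cases "0 < x \<and> x < 1")
          case True
          thus ?thesis using sliceF[of x s] s by (simp add: f_def)
        next
          case False
          hence "x < 0 \<or> x > 1" using x by auto
          hence "\<And>y. indicator regionT (x,y) = (0::real)" by (auto simp: regionT_def indicator_def)
          thus ?thesis using False by (simp add: f_def)
        qed
      qed
      also have "\<dots> = ennreal ((1 - 1 / gen_binom (2 * s) s) / s\<^sup>2)" by (rule betaF[OF s])
      finally show ?thesis using s by simp
    qed
  qed
  finally show ?thesis .
qed

lemma F_meas: "(\<lambda>s::real. indicator {0<..} s * ((1 - 1 / gen_binom (2 * s) s) / s\<^sup>2)) \<in> borel_measurable borel"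
proof -
  have "continuous_on {0<..} (\<lambda>t::real. (1 - 1 / gen_binom (2 * t) t) / t\<^sup>2)"
  proof (intro continuous_at_imp_continuous_on ballI)
    fix t :: real assume "t \<in> {0<..}"
    hence t: "0 < t" by simp
    have n: "t + 1 \<notin> \<int>\<^sub>\<le>\<^sub>0" "2 * t - t + 1 \<notin> \<int>\<^sub>\<le>\<^sub>0" "2 * t + 1 \<notin> \<int>\<^sub>\<le>\<^sub>0"
      using t by (auto dest!: nonpos_Ints_nonpos)
    have p: "Gamma (t + 1) > 0" "Gamma (2 * t - t + 1) > 0" "Gamma (2 * t + 1) > 0" using t by auto
    show "isCont (\<lambda>t::real. (1 - 1 / gen_binom (2 * t) t) / t\<^sup>2) t"
      unfolding gen_binom_def apply (intro continuous_intros) using n t apply auto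
      using p by linarith+
  qed
  from borel_measurable_continuous_on_indicator[OF _ this] show ?thesis by simp
qed

lemma Im1_nonneg: "p \<in> regionT \<Longrightarrow> 0 \<le> Im1_integrand p"
proof -
  assume "p \<in> regionT"
  then obtain x y where p: "p = (x,y)" "0 \<le> x" "x \<le> 1" "0 \<le> y" "y \<le> 1"
    by (cases p) (auto simp: regionT_def)
  have "x * y \<le> 1" using p by (simp add: mult_le_one)
  hence "ln (x * y) \<le> 0" using p by (cases "x * y = 0") auto
  hence "0 \<le> x * y * (- ln (x * y))" using p by (intro mult_nonneg_nonneg) auto
  thus ?thesis using p by (simp add: Im1_integrand_def)
qed

theorem proposition1:
  shows "set_integrable lborel regionT Im1_integrand
    \<and> set_integrable lborel {0<..} (\<lambda>t::real. (1 - 1 / gen_binom (2 * t) t) / t\<^sup>2)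
    \<and> set_integrable lborel {0<..<1} (\<lambda>x::real. ln (1 + ln (1 - x) / ln x) / x)
    \<and> (LINT p:regionT|lborel. Im1_integrand p)
           = (LINT t:{0<..}|lborel. (1 - 1 / gen_binom (2 * t) t) / t\<^sup>2)
    \<and> (LINT t:{0<..}|lborel. (1 - 1 / gen_binom (2 * t) t) / t\<^sup>2)
           = (LINT x:{0<..<1}|lborel. ln (1 + ln (1 - x) / ln x) / x)"
proof -
  define G where "G x = ln (1 + ln (1 - x) / ln x) / x" for x :: real
  define F where "F t = (1 - 1 / gen_binom (2 * t) t) / t\<^sup>2" for t :: real
  have GI: "set_integrable lborel {0<..<1} G" using G_int unfolding G_def .
  define r where "r = (LINT x:{0<..<1}|lborel. G x)"
  have GI': "integrable lborel (\<lambda>x. indicator {0<..<1} x * G x)"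
    using GI by (simp add: set_integrable_def)
  have Gnn0: "AE x in lborel. 0 \<le> indicator {0<..<1} x * G x"
    by (rule AE_I2) (auto simp: G_def indicator_def dest: Gbound)
  have r_eq: "r = integral\<^sup>L lborel (\<lambda>x. indicator {0<..<1} x * G x)"
    by (simp add: r_def set_lebesgue_integral_def)
  have Gnn: "(\<integral>\<^sup>+x. ennreal (indicator {0<..<1} x * G x) \<partial>lborel) = ennreal r"
    unfolding r_eq by (rule nn_integral_eq_integral[OF GI' Gnn0])
  have r0: "0 \<le> r" unfolding r_eq using Gnn0 by (rule integral_nonneg_AE)
  have NG: "(\<integral>\<^sup>+p. ennreal (indicator regionT p * Im1_integrand p) \<partial>lborel) = ennreal r"
    using stepA Gnn unfolding G_def by simp
  have NF: "(\<integral>\<^sup>+s. ennreal (indicator {0<..} s * F s) \<partial>lborel) = ennreal r"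
    using stepA stepB Gnn unfolding G_def F_def by simp
  have Fm: "(\<lambda>s. indicator {0<..} s * F s) \<in> borel_measurable lborel"
    using F_meas unfolding F_def by simp
  have Fnn: "AE s in lborel. 0 \<le> indicator {0<..} s * F s"
    by (rule AE_I2) (auto simp: F_def indicator_def intro: Ff_nonneg)
  have Fi: "integrable lborel (\<lambda>s. indicator {0<..} s * F s) \<and> integral\<^sup>L lborel (\<lambda>s. indicator {0<..} s * F s) = r"
    using nn_integral_eq_integrable[OF Fm Fnn r0] NF by simp
  have Im: "(\<lambda>p. indicator regionT p * Im1_integrand p) \<in> borel_measurable lborel"
    by simp measurable
  have Inn: "AE p in lborel. 0 \<le> indicator regionT p * Im1_integrand (p::real\<times>real)"
    by (rule AE_I2) (auto simp: indicator_def intro: Im1_nonneg)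
  have Ii: "integrable lborel (\<lambda>p. indicator regionT p * Im1_integrand p) \<and> integral\<^sup>L lborel (\<lambda>p. indicator regionT p * Im1_integrand p) = r"
    using nn_integral_eq_integrable[OF Im Inn r0] NG by simp
  show ?thesis
    using GI Fi Ii r_def
    unfolding set_integrable_def set_lebesgue_integral_def G_def F_def by simp
qed

end
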